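(* Let $X$ be a shift space such that $s_n(X)\le k$ for all $n\ge0$. Then the number of right asymptotic classes of $X$ is finite and at most $k$.
   Context: $A$ is a finite alphabet; a shift space is a closed shift-invariant subset $X\subseteq A^{\mathbb Z}$; $p_n(X)$ is the number of words of length $n$ occurring as factors of elements of $X$, and $s_n(X)=p_{n+1}(X)-p_n(X)$. For $x\in A^{\mathbb Z}$ write $x^+=x_0x_1\cdots$. Two elements $x,y\in X$ are right asymptotically equivalent if there are shifts $x'=\sigma^i(x)$, $y'=\sigma^j(y)$ with $x'^+=y'^+$ (i.e. they have a common tail). Each equivalence class is a union of orbits; the right asymptotic classes are the equivalence classes which contain more than one orbit. *)

theory Defs
  imports "HOL-Analysis.Analysis"
begin

text \<open>Points of the full shift over a finite alphabet 'a (a finite type) are maps int => 'a.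
  The full shift carries the product topology of discrete topologies.\<close>

definition shift :: "(int \<Rightarrow> 'a) \<Rightarrow> (int \<Rightarrow> 'a)" where
  "shift x = (\<lambda>m. x (m + 1))"

definition shiftn :: "int \<Rightarrow> (int \<Rightarrow> 'a) \<Rightarrow> (int \<Rightarrow> 'a)" where
  "shiftn i x = (\<lambda>m. x (m + i))"

definition shift_space :: "(int \<Rightarrow> 'a::finite) set \<Rightarrow> bool" where
  "shift_space X \<longleftrightarrow>
     closedin (product_topology (\<lambda>_::int. discrete_topology (UNIV::'a set)) UNIV) X
     \<and> shift ` X = X"

definition language :: "nat \<Rightarrow> (int \<Rightarrow> 'a) set \<Rightarrow> 'a list set" where
  "language n X = {w. length w = n \<and> (\<exists>x\<in>X. \<exists>i::int. \<forall>j<n. x (i + int j) = w ! j)}"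

definition complexity :: "(int \<Rightarrow> 'a) set \<Rightarrow> nat \<Rightarrow> nat" where
  "complexity X n = card (language n X)"

definition complexity_diff :: "(int \<Rightarrow> 'a) set \<Rightarrow> nat \<Rightarrow> int" where
  "complexity_diff X n = int (complexity X (Suc n)) - int (complexity X n)"

definition right_asym :: "(int \<Rightarrow> 'a) \<Rightarrow> (int \<Rightarrow> 'a) \<Rightarrow> bool" where
  "right_asym x y \<longleftrightarrow> (\<exists>i j::int. \<forall>m::int. m \<ge> 0 \<longrightarrow> shiftn i x m = shiftn j y m)"

definition orbit :: "(int \<Rightarrow> 'a) \<Rightarrow> (int \<Rightarrow> 'a) set" where
  "orbit x = {shiftn i x | i. True}"

definition asym_class :: "(int \<Rightarrow> 'a) set \<Rightarrow> (int \<Rightarrow> 'a) \<Rightarrow> (int \<Rightarrow> 'a) set" where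
  "asym_class X x = {y \<in> X. right_asym x y}"

text \<open>right asymptotic classes: equivalence classes containing more than one orbit\<close>
definition right_asym_classes :: "(int \<Rightarrow> 'a) set \<Rightarrow> (int \<Rightarrow> 'a) set set" where
  "right_asym_classes X =
     {C. \<exists>x\<in>X. C = asym_class X x \<and> (\<exists>y\<in>C. y \<notin> orbit x)}"

end

theory Submission
  imports Defs
begin

lemma lang_finite: "finite (language n (X :: (int \<Rightarrow> 'a::finite) set))"
proof -
  have "language n X \<subseteq> {xs. set xs \<subseteq> UNIV \<and> length xs = n}"
    by (auto simp: language_def)
  then show ?thesis using finite_lists_length_eq[of "UNIV::'a set" n]
    by (auto intro: finite_subset)
qed

lemma tl_lang: "v \<in> language (Suc n) X \<Longrightarrow> tl v \<in> language n X"
proof -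
  assume "v \<in> language (Suc n) X"
  then obtain x i where x: "x \<in> X" "length v = Suc n"
    "\<forall>j<Suc n. x (i + int j) = v ! j" by (auto simp: language_def)
  have "\<forall>j<n. x ((i+1) + int j) = tl v ! j"
  proof (intro allI impI)
    fix j assume "j < n"
    then have "x (i + int (Suc j)) = v ! Suc j" using x by auto
    moreover have "tl v ! j = v ! Suc j" using x by (cases v) auto
    ultimately show "x ((i+1) + int j) = tl v ! j" by (simp add: add.commute add.left_commute)
  qed
  then show ?thesis using x unfolding language_def by (auto intro!: exI[of _ "i+1"])
qed

lemma ext_lang: "w \<in> language n X \<Longrightarrow> \<exists>v\<in>language (Suc n) X. tl v = w"
proof -
  assume "w \<in> language n X"
  then obtain x i where x: "x \<in> X" "length w = n"
    "\<forall>j<n. x (i + int j) = w ! j" by (auto simp: language_def)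
  have "\<forall>j<Suc n. x ((i - 1) + int j) = (x (i - 1) # w) ! j"
  proof (intro allI impI)
    fix j assume j: "j < Suc n"
    show "x ((i - 1) + int j) = (x (i - 1) # w) ! j"
    proof (cases j)
      case 0 then show ?thesis by simp
    next
      case (Suc j') then show ?thesis using x j by auto
    qed
  qed
  then have "x (i - 1) # w \<in> language (Suc n) X" using x unfolding language_def by auto
  then show ?thesis by force
qed

definition LS :: "nat \<Rightarrow> (int \<Rightarrow> 'a) set \<Rightarrow> 'a list set" where
  "LS n X = {w \<in> language n X. \<exists>v1 v2. v1 \<in> language (Suc n) X \<and> v2 \<in> language (Suc n) X
      \<and> tl v1 = w \<and> tl v2 = w \<and> v1 \<noteq> v2}"

lemma LS_card: "card (language n X) + card (LS n X) \<le> card (language (Suc n) (X :: (int \<Rightarrow> 'a::finite) set))"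
proof -
  define F where "F w = {v \<in> language (Suc n) X. tl v = w}" for w
  have U: "language (Suc n) X = (\<Union>w\<in>language n X. F w)"
    using tl_lang unfolding F_def by blast
  have c: "card (language (Suc n) X) = (\<Sum>w\<in>language n X. card (F w))"
    unfolding U
    by (rule card_UN_disjoint) (auto simp: lang_finite F_def)
  have ge: "card (F w) \<ge> 1 + (if w \<in> LS n X then 1 else 0)" if w: "w \<in> language n X" for w
  proof -
    have fin: "finite (F w)" unfolding F_def by (rule finite_subset[OF _ lang_finite[of "Suc n" X]]) auto
    show ?thesis
    proof (cases "w \<in> LS n X")
      case True
      then obtain v1 v2 where "v1 \<in> F w" "v2 \<in> F w" "v1 \<noteq> v2"
        unfolding LS_def F_def by auto
      then have "{v1, v2} \<subseteq> F w" by auto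
      then have "card {v1,v2} \<le> card (F w)" using fin by (rule card_mono[rotated])
      then show ?thesis using True \<open>v1 \<noteq> v2\<close> by simp
    next
      case False
      from ext_lang[OF w] have "F w \<noteq> {}" unfolding F_def by auto
      then show ?thesis using False fin by (simp add: Suc_le_eq card_gt_0_iff)
    qed
  qed
  have "(\<Sum>w\<in>language n X. (1::nat) + (if w \<in> LS n X then 1 else 0)) \<le> (\<Sum>w\<in>language n X. card (F w))"
    by (rule sum_mono) (use ge in auto)
  moreover have "(\<Sum>w\<in>language n X. (1::nat) + (if w \<in> LS n X then 1 else 0))
      = card (language n X) + card (LS n X)"
  proof -
    have "(\<Sum>w\<in>language n X. (if w \<in> LS n X then 1 else 0::nat)) = card {w \<in> language n X. w \<in> LS n X}"
      using sum.inter_filter[OF lang_finite, of "\<lambda>_. 1::nat" n X "\<lambda>w. w \<in> LS n X", symmetric] by simp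
    also have "{w \<in> language n X. w \<in> LS n X} = LS n X" unfolding LS_def by auto
    finally have h: "(\<Sum>w\<in>language n X. (if w \<in> LS n X then 1 else 0::nat)) = card (LS n X)" .
    have "(\<Sum>w\<in>language n X. (1::nat) + (if w \<in> LS n X then 1 else 0)) = (\<Sum>w\<in>language n X. 1) + (\<Sum>w\<in>language n X. (if w \<in> LS n X then 1 else 0))"
      by (rule sum.distrib)
    then show ?thesis using h by simp
  qed
  ultimately show ?thesis using c by simp
qed

lemma ra_sym: "right_asym x y \<Longrightarrow> right_asym y x"
  unfolding right_asym_def by metis

lemma ra_trans: assumes "right_asym x y" "right_asym y z" shows "right_asym x z"
proof -
  obtain i j where ij: "\<forall>m\<ge>0. x (m+i) = y (m+j)" using assms(1) unfolding right_asym_def shiftn_def by auto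
  obtain i' j' where ij': "\<forall>m\<ge>0. y (m+i') = z (m+j')" using assms(2) unfolding right_asym_def shiftn_def by auto
  define a where "a = max 0 (i' - j)"
  define b where "b = max 0 (j - i')"
  have "\<forall>m\<ge>0. x (m + (i+a)) = z (m + (j'+b))"
  proof (intro allI impI)
    fix m :: int assume m: "m \<ge> 0"
    have "x (m + (i+a)) = x ((m+a) + i)" by (simp add: algebra_simps)
    also have "\<dots> = y ((m+a) + j)" using ij m by (simp add: a_def)
    also have "\<dots> = y ((m+b) + i')" by (simp add: a_def b_def algebra_simps max_def)
    also have "\<dots> = z ((m+b) + j')" using ij' m by (simp add: b_def)
    finally show "x (m + (i+a)) = z (m + (j'+b))" by (simp add: algebra_simps)
  qed
  then show ?thesis unfolding right_asym_def shiftn_def by blast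
qed

definition T :: "(int \<Rightarrow> 'a) set \<Rightarrow> (nat \<Rightarrow> 'a) set" where
  "T C = {u. \<exists>x\<in>C. \<exists>y\<in>C. \<exists>p q. (\<forall>m::nat. x (p + int m) = u m \<and> y (q + int m) = u m) \<and> x (p - 1) \<noteq> y (q - 1)}"

lemma T_LS: assumes "C \<subseteq> X" "u \<in> T C" shows "map u [0..<n] \<in> LS n X"
proof -
  obtain x y p q where xy: "x \<in> X" "y \<in> X" "\<forall>m::nat. x (p + int m) = u m \<and> y (q + int m) = u m"
    "x (p - 1) \<noteq> y (q - 1)" using assms unfolding T_def by blast
  have inl: "z \<in> X \<Longrightarrow> \<forall>m::nat. z (r + int m) = u m \<Longrightarrow> z (r - 1) # map u [0..<n] \<in> language (Suc n) X" for z r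
  proof -
    assume z: "z \<in> X" "\<forall>m::nat. z (r + int m) = u m"
    have "\<forall>j<Suc n. z ((r - 1) + int j) = (z (r - 1) # map u [0..<n]) ! j"
    proof (intro allI impI)
      fix j assume j: "j < Suc n"
      show "z ((r - 1) + int j) = (z (r - 1) # map u [0..<n]) ! j"
      proof (cases j)
        case 0 then show ?thesis by simp
      next
        case (Suc j') then show ?thesis using z j by (auto simp: nth_append)
      qed
    qed
    then show ?thesis using z unfolding language_def by auto
  qed
  have a: "map u [0..<n] \<in> language n X"
    using xy unfolding language_def by (auto intro!: bexI[of _ x] exI[of _ p])
  have b: "x (p - 1) # map u [0..<n] \<in> language (Suc n) X" using inl[of x p] xy by blast
  have c: "y (q - 1) # map u [0..<n] \<in> language (Suc n) X" using inl[of y q] xy by blast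
  have d: "x (p - 1) # map u [0..<n] \<noteq> y (q - 1) # map u [0..<n]" using xy(4) by simp
  show ?thesis unfolding LS_def mem_Collect_eq
    by (intro conjI a exI[of _ "x (p - 1) # map u [0..<n]"] exI[of _ "y (q - 1) # map u [0..<n]"] b c d) simp_all
qed

lemma T_nonempty: assumes "C \<in> right_asym_classes X" shows "T C \<noteq> {}"
proof -
  obtain x y where x: "x \<in> X" "C = asym_class X x" "y \<in> C" "y \<notin> orbit x"
    using assms unfolding right_asym_classes_def by auto
  have yX: "y \<in> X" and ra: "right_asym x y" using x unfolding asym_class_def by auto
  obtain i j where ij: "\<forall>m\<ge>0. x (m+i) = y (m+j)" using ra unfolding right_asym_def shiftn_def by auto
  have ex: "\<exists>d::nat. x (i - int d - 1) \<noteq> y (j - int d - 1)"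
  proof (rule ccontr)
    assume "\<not> ?thesis"
    then have nd: "\<forall>d::nat. x (i - int d - 1) = y (j - int d - 1)" by auto
    have all: "x (m+i) = y (m+j)" for m
    proof (cases "m \<ge> 0")
      case True then show ?thesis using ij by auto
    next
      case False
      have "x (i - int (nat (-m-1)) - 1) = y (j - int (nat (-m-1)) - 1)" using nd by blast
      then show ?thesis using False by (simp add: algebra_simps)
    qed
    have "y = shiftn (i - j) x"
    proof
      fix n
      have "y n = y ((n - j) + j)" by simp
      also have "\<dots> = x ((n-j) + i)" using all by metis
      finally show "y n = shiftn (i - j) x n" by (simp add: shiftn_def algebra_simps)
    qed
    then show False using x(4) unfolding orbit_def by auto
  qed
  define d0 where "d0 = (LEAST d::nat. x (i - int d - 1) \<noteq> y (j - int d - 1))"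
  have d0: "x (i - int d0 - 1) \<noteq> y (j - int d0 - 1)" unfolding d0_def using LeastI_ex[OF ex] .
  have agree: "x ((i - int d0) + int m) = y ((j - int d0) + int m)" for m :: nat
  proof (cases "m \<ge> d0")
    case True
    have "x (int (m - d0) + i) = y (int (m - d0) + j)" using ij by auto
    then show ?thesis using True by (simp add: algebra_simps of_nat_diff)
  next
    case False
    then have "d0 - m - 1 < d0" by auto
    then have "x (i - int (d0 - m - 1) - 1) = y (j - int (d0 - m - 1) - 1)"
      using not_less_Least[of "d0 - m - 1" "\<lambda>d. x (i - int d - 1) \<noteq> y (j - int d - 1)"]
      unfolding d0_def by blast
    then show ?thesis using False by (simp add: algebra_simps of_nat_diff)
  qed
  have xC: "x \<in> C" using x unfolding asym_class_def right_asym_def by auto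
  have e1: "\<forall>m::nat. x ((i - int d0) + int m) = (\<lambda>m. x ((i - int d0) + int m)) m \<and> y ((j - int d0) + int m) = (\<lambda>m. x ((i - int d0) + int m)) m"
    using agree by simp
  have e2: "x ((i - int d0) - 1) \<noteq> y ((j - int d0) - 1)" using d0 by simp
  have "(\<lambda>m. x ((i - int d0) + int m)) \<in> T C"
    unfolding T_def mem_Collect_eq using xC x(3) e1 e2 by blast
  then show ?thesis by blast
qed

lemma T_unique: assumes "C \<in> right_asym_classes X" "D \<in> right_asym_classes X" "u \<in> T C" "u \<in> T D"
  shows "C = D"
proof -
  obtain c where c: "C = asym_class X c" using assms(1) unfolding right_asym_classes_def by auto
  obtain d where d: "D = asym_class X d" using assms(2) unfolding right_asym_classes_def by auto
  obtain x p where xp: "x \<in> C" "\<forall>m::nat. x (p + int m) = u m" using assms(3) unfolding T_def by blast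
  obtain x' p' where xp': "x' \<in> D" "\<forall>m::nat. x' (p' + int m) = u m" using assms(4) unfolding T_def by blast
  have "\<forall>m\<ge>0. x (m + p) = x' (m + p')"
  proof (intro allI impI)
    fix m :: int assume "m \<ge> 0"
    then have "m = int (nat m)" by simp
    then show "x (m + p) = x' (m + p')" using xp(2)[rule_format, of "nat m"] xp'(2)[rule_format, of "nat m"]
      by (metis add.commute)
  qed
  then have r: "right_asym x x'" unfolding right_asym_def shiftn_def by blast
  have "right_asym c x" using xp c unfolding asym_class_def by auto
  moreover have "right_asym d x'" using xp' d unfolding asym_class_def by auto
  ultimately have cd: "right_asym c d" using r by (meson ra_sym ra_trans)
  show ?thesis unfolding c d asym_class_def using cd by (meson ra_sym ra_trans)
qed

lemma prefix_inj: assumes "finite (U :: (nat \<Rightarrow> 'a) set)" shows "\<exists>N. inj_on (\<lambda>u. map u [0..<N]) U"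
proof -
  define D where "D = (\<lambda>(u,v). LEAST n. u n \<noteq> v n) ` {(u,v). u \<in> U \<and> v \<in> U \<and> u \<noteq> v}"
  have fD: "finite D" unfolding D_def
    by (rule finite_imageI, rule finite_subset[of _ "U \<times> U"]) (use assms in auto)
  define N where "N = Suc (Max (insert 0 D))"
  have "inj_on (\<lambda>u. map u [0..<N]) U"
  proof (rule inj_onI, rule ccontr)
    fix u v assume uv: "u \<in> U" "v \<in> U" "map u [0..<N] = map v [0..<N]" "u \<noteq> v"
    define e where "e = (LEAST n. u n \<noteq> v n)"
    have ex: "\<exists>n. u n \<noteq> v n" using uv(4) by auto
    have ue: "u e \<noteq> v e" unfolding e_def using LeastI_ex[OF ex] .
    have "e \<in> D" unfolding D_def e_def using uv by force
    then have "e \<le> Max (insert 0 D)" using fD by simp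
    then have "e < N" unfolding N_def by simp
    then have "map u [0..<N] ! e = map v [0..<N] ! e" using uv(3) by simp
    then show False using ue \<open>e < N\<close> by simp
  qed
  then show ?thesis by blast
qed

theorem mainTheorem4:
  fixes X :: "(int \<Rightarrow> 'a::finite) set" and k :: nat
  assumes "shift_space X"
    and "\<And>n. complexity_diff X n \<le> int k"
  shows "finite (right_asym_classes X) \<and> card (right_asym_classes X) \<le> k"
proof -
  define tail where "tail C = (SOME u. u \<in> T C)" for C :: "(int \<Rightarrow> 'a) set"
  have tT: "tail C \<in> T C" if "C \<in> right_asym_classes X" for C
    unfolding tail_def using T_nonempty[OF that] by (simp add: some_in_eq)
  have inj: "inj_on tail (right_asym_classes X)"
    by (rule inj_onI) (metis tT T_unique)
  have sub: "C \<subseteq> X" if "C \<in> right_asym_classes X" for C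
    using that unfolding right_asym_classes_def asym_class_def by auto
  have LSk: "card (LS n X) \<le> k" for n
  proof -
    have "card (language n X) + card (LS n X) \<le> card (language (Suc n) X)" by (rule LS_card)
    then show ?thesis using assms(2)[of n] unfolding complexity_diff_def complexity_def by linarith
  qed
  have bound: "card S \<le> k" if S: "finite S" "S \<subseteq> right_asym_classes X" for S
  proof -
    have fU: "finite (tail ` S)" using S by simp
    obtain N where N: "inj_on (\<lambda>u. map u [0..<N]) (tail ` S)" using prefix_inj[OF fU] by blast
    have "card S = card (tail ` S)" using inj S by (metis card_image inj_on_subset)
    also have "\<dots> = card ((\<lambda>u. map u [0..<N]) ` tail ` S)" using N by (simp add: card_image)
    also have "\<dots> \<le> card (LS N X)"
    proof (rule card_mono)
      show "finite (LS N X)" by (rule finite_subset[OF _ lang_finite[of N X]]) (auto simp: LS_def)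
      show "(\<lambda>u. map u [0..<N]) ` tail ` S \<subseteq> LS N X"
      proof
        fix w assume "w \<in> (\<lambda>u. map u [0..<N]) ` tail ` S"
        then obtain C where C: "C \<in> S" "w = map (tail C) [0..<N]" by blast
        then have "C \<in> right_asym_classes X" using S by blast
        then show "w \<in> LS N X" using T_LS[OF sub tT] C by simp
      qed
    qed
    also have "\<dots> \<le> k" by (rule LSk)
    finally show ?thesis .
  qed
  have fin: "finite (right_asym_classes X)"
  proof (rule ccontr)
    assume "infinite (right_asym_classes X)"
    then obtain S where "finite S" "card S = Suc k" "S \<subseteq> right_asym_classes X"
      using infinite_arbitrarily_large by blast
    then show False using bound[of S] by simp
  qed
  then show ?thesis using bound by blast
qed

end
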